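(* Let $\varepsilon\in[0,1/6]$ and let $\alpha,\beta,\gamma\in\mathbb{C}$ satisfy $|\alpha|,|\beta|,|\gamma|\in[1-\varepsilon,1]$ and $|\alpha+\beta+\gamma|\le\varepsilon$. Then for each angle $\theta\in\{\arg(\alpha)-\arg(\beta),\ \arg(\beta)-\arg(\gamma),\ \arg(\gamma)-\arg(\alpha)\}$, interpreted (modulo $2\pi$) as an element of $[0,2\pi)$, one has $|\theta-2\pi/3|\le6\varepsilon$ or $|\theta-4\pi/3|\le6\varepsilon$. *)

theory Defs
  imports "HOL-Analysis.Analysis"
begin

definition angle_mod :: "real \<Rightarrow> real" where
  "angle_mod x = x - 2 * pi * of_int \<lfloor>x / (2 * pi)\<rfloor>"

end

theory Submission
  imports Defs
begin



lemma cos_lb: "1 - t^2/2 \<le> cos (t::real)"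
proof -
  have "cos t = cos (2 * (t/2))" by simp
  also have "\<dots> = 1 - 2 * sin (t/2) ^ 2" by (rule cos_double_sin)
  finally have e: "cos t = 1 - 2 * sin (t/2) ^ 2" .
  have "\<bar>sin (t/2)\<bar> \<le> \<bar>t/2\<bar>" by (rule abs_sin_x_le_abs_x)
  hence "\<bar>sin (t/2)\<bar>^2 \<le> \<bar>t/2\<bar>^2" by (rule power_mono) simp
  hence "sin (t/2)^2 \<le> (t/2)^2" by (simp only: power2_abs)
  thus ?thesis unfolding e by (simp add: power_divide)
qed

lemma sin_lb: assumes "0 \<le> t" shows "t - t^3/6 \<le> sin (t::real)"
proof -
  have "\<bar>sin t - (\<Sum>m<3. sin_coeff m * t ^ m)\<bar> \<le> inverse (fact 3) * \<bar>t\<bar> ^ 3"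
    by (rule Maclaurin_sin_bound)
  moreover have "(\<Sum>m<3. sin_coeff m * t ^ m) = t"
    by (simp add: numeral_3_eq_3 sin_coeff_def)
  moreover have "(fact 3 :: real) = 6" by (simp add: numeral_3_eq_3)
  moreover have "\<bar>t\<bar> ^ 3 = t^3" using assms by simp
  ultimately have "\<bar>sin t - t\<bar> \<le> inverse 6 * t^3" by simp
  hence "-(sin t - t) \<le> inverse 6 * t^3" by (rule abs_le_D2)
  moreover have "inverse 6 * t^3 = t^3/6" by simp
  ultimately show ?thesis by linarith
qed

lemma cos_120: "cos (2*pi/3) = -1/2" and sin_120: "sin (2*pi/3) = sqrt 3/2"
proof -
  have "2*pi/3 = pi - pi/3" by simp
  hence a: "cos (2*pi/3) = cos (pi - pi/3)" "sin (2*pi/3) = sin (pi - pi/3)" by simp_all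
  show "cos (2*pi/3) = -1/2" "sin (2*pi/3) = sqrt 3/2" unfolding a cos_pi_minus sin_pi_minus cos_60 sin_60 by simp_all
qed

lemma sqrt3: "sqrt 3 \<ge> (1.7::real)"
  by (rule real_le_rsqrt) (simp add: power2_eq_square)

lemma angA:
  fixes e th :: real
  assumes e0: "0 \<le> e" and e1: "e \<le> 1/6" and th0: "0 \<le> th" and thpi: "th \<le> pi"
    and lo: "-1/2 - 2*e \<le> cos th" and hi: "cos th \<le> -1/2 + 3*e"
  shows "\<bar>th - 2*pi/3\<bar> \<le> 6*e"
proof -
  define t where "t = 6*e"
  have t0: "0 \<le> t" and t1: "t \<le> 1" using e0 e1 by (simp_all add: t_def)
  have pi3: "3 < pi" by (rule pi_gt3)
  have s3: "sqrt 3 \<ge> 1.7" by (rule sqrt3)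
  have sl: "t - t^3/6 \<le> sin t" by (rule sin_lb[OF t0])
  have cl: "1 - t^2/2 \<le> cos t" by (rule cos_lb)
  have cu: "cos t \<le> 1" by simp
  have t2: "t^2 \<le> t"
  proof -
    have "t*t \<le> t*1" by (rule mult_left_mono) (use t1 t0 in auto)
    thus ?thesis by (simp add: power2_eq_square)
  qed
  have t3: "t^3 \<le> t"
  proof -
    have "t^3 = t*t^2" by (simp add: power3_eq_cube power2_eq_square)
    also have "\<dots> \<le> t*1" by (rule mult_left_mono) (use t2 t1 t0 in auto)
    finally show ?thesis by simp
  qed
  have sin_pos: "5*t/6 \<le> sin t" using sl t3 by linarith
  have A: "th \<ge> 2*pi/3 - t"
  proof (rule ccontr)
    assume "\<not> ?thesis"
    hence lt: "th < 2*pi/3 - t" by simp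
    have "cos (2*pi/3 - t) < cos th"
      by (rule cos_monotone_0_pi[OF th0 lt]) (use pi3 t1 t0 in linarith)
    moreover have "cos (2*pi/3 - t) = -1/2 * cos t + sqrt 3/2 * sin t"
      by (simp add: cos_diff cos_120 sin_120)
    moreover have "sqrt 3/2 * sin t \<ge> 1.7/2 * (5*t/6)"
      by (rule mult_mono) (use s3 sin_pos t0 in auto)
    ultimately show False using hi cu t_def t0 by linarith
  qed
  have B: "th \<le> 2*pi/3 + t"
  proof (rule ccontr)
    assume "\<not> ?thesis"
    hence lt: "2*pi/3 + t < th" by simp
    have "cos th < cos (2*pi/3 + t)"
      by (rule cos_monotone_0_pi[OF _ lt thpi]) (use pi3 t0 in linarith)
    moreover have "cos (2*pi/3 + t) = -1/2 * cos t - sqrt 3/2 * sin t"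
      by (simp add: cos_add cos_120 sin_120)
    moreover have "sqrt 3/2 * sin t \<ge> 1.7/2 * (t - t^3/6)"
      by (rule mult_mono) (use s3 sl sin_pos t0 t3 in auto)
    hence "sqrt 3/2 * sin t \<ge> 17/20*t - 17/120 * t^3" by (simp add: algebra_simps)
    moreover have "t * (t/4 - 31/60 + 17/120 * t^2) \<le> 0"
    proof (rule mult_nonneg_nonpos[OF t0])
      show "t/4 - 31/60 + 17/120 * t^2 \<le> 0" using t2 t1 by linarith
    qed
    moreover have "t * (t/4 - 31/60 + 17/120 * t^2) = t^2/4 - 31/60*t + 17/120*t^3"
      by (simp add: algebra_simps power2_eq_square power3_eq_cube)
    ultimately show False using lo cl t_def by linarith
  qed
  show ?thesis using A B t_def by linarith
qed

lemma angT:
  fixes e x :: real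
  assumes e0: "0 \<le> e" and e1: "e \<le> 1/6"
    and lo: "-1/2 - 2*e \<le> cos x" and hi: "cos x \<le> -1/2 + 3*e"
  shows "\<bar>angle_mod x - 2*pi/3\<bar> \<le> 6*e \<or> \<bar>angle_mod x - 4*pi/3\<bar> \<le> 6*e"
proof -
  define k where "k = \<lfloor>x / (2*pi)\<rfloor>"
  define th where "th = angle_mod x"
  have thd: "th = x - 2*pi * of_int k" by (simp add: th_def k_def angle_mod_def)
  have pi0: "0 < pi" by (rule pi_gt_zero)
  have k1: "of_int k \<le> x/(2*pi)" and k2: "x/(2*pi) < of_int k + 1"
    by (simp_all add: k_def)
  have "of_int k * (2*pi) \<le> x" using k1 pi0 by (simp only: pos_le_divide_eq)
  hence "2*pi * of_int k \<le> x" by (simp only: mult.commute)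
  hence th0: "0 \<le> th" by (simp add: thd)
  have "x < (of_int k + 1) * (2*pi)" using k2 pi0 by (simp only: pos_divide_less_eq)
  hence "x < 2*pi * of_int k + 2*pi" by (simp only: distrib_right mult.commute mult_1_left)
  hence th2: "th < 2*pi" by (simp add: thd)
  have "cos th = cos x * cos (2*pi * of_int k) + sin x * sin (2*pi * of_int k)"
    unfolding thd by (rule cos_diff)
  hence "cos th = cos x" by simp
  hence lo': "-1/2 - 2*e \<le> cos th" and hi': "cos th \<le> -1/2 + 3*e" using lo hi by simp_all
  show ?thesis
  proof (cases "th \<le> pi")
    case True
    then show ?thesis using angA[OF e0 e1 th0 True lo' hi'] th_def by simp
  next
    case False
    define th' where "th' = 2*pi - th"
    have c: "cos th' = cos th" by (simp add: th'_def)
    have "\<bar>th' - 2*pi/3\<bar> \<le> 6*e"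
      by (rule angA[OF e0 e1]) (use False th2 c lo' hi' th'_def in auto)
    hence "\<bar>th - 4*pi/3\<bar> \<le> 6*e" by (simp add: th'_def abs_minus_commute)
    then show ?thesis using th_def by simp
  qed
qed


lemma re_cnj: "Re (u * cnj v) = cmod u * cmod v * cos (Arg u - Arg v)"
proof -
  have g: "\<And>a b x y. (complex_of_real a * cis x) * cnj (complex_of_real b * cis y) = complex_of_real (a*b) * cis (x - y)"
    by (simp add: cis_cnj cis_mult)
  have u: "u = complex_of_real (cmod u) * cis (Arg u)" by (metis rcis_def rcis_cmod_Arg)
  have v: "v = complex_of_real (cmod v) * cis (Arg v)" by (metis rcis_def rcis_cmod_Arg)
  have "u * cnj v = complex_of_real (cmod u * cmod v) * cis (Arg u - Arg v)"
    using g[of "cmod u" "Arg u" "cmod v" "Arg v"] u v by simp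
  thus ?thesis by simp
qed

lemma norm_sum_sq: "(cmod (u + v))^2 = (cmod u)^2 + (cmod v)^2 + 2 * Re (u * cnj v)"
  unfolding cmod_power2 by (simp add: power2_eq_square algebra_simps)

lemma polyB:
  fixes a b s e R :: real
  assumes e0: "0 \<le> e" and e1: "e \<le> 1/6"
    and a1: "1 - e \<le> a" and a2: "a \<le> 1" and b1: "1 - e \<le> b" and b2: "b \<le> 1"
    and s1: "1 - 2*e \<le> s" and s2: "s \<le> 1 + e"
    and R: "s^2 = a^2 + b^2 + 2*R"
  shows "(-1/2 - 2*e) * (a*b) \<le> R" and "R \<le> (-1/2 + 3*e) * (a*b)"
proof -
  have ab1: "(1-e)*(1-e) \<le> a*b" by (rule mult_mono) (use a1 b1 e1 in auto)
  have ab2: "a*b \<le> 1*1" by (rule mult_mono) (use a2 b2 a1 b1 e1 in auto)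
  have sq0: "0 \<le> (a-b)^2" by simp
  have "\<bar>a - b\<bar> \<le> e" using a1 a2 b1 b2 by linarith
  hence "\<bar>a - b\<bar>^2 \<le> e^2" by (rule power_mono) simp
  hence sqe: "(a-b)^2 \<le> e^2" by (simp only: power2_abs)
  have sl: "(1-2*e)^2 \<le> s^2" by (rule power_mono) (use s1 e1 in auto)
  have su: "s^2 \<le> (1+e)^2" by (rule power_mono) (use s1 s2 e1 in auto)
  have m1: "(1-4*e)*(a*b) \<le> (1-4*e)*1" by (rule mult_left_mono) (use ab2 e1 in auto)
  have m2: "(1+6*e)*((1-e)*(1-e)) \<le> (1+6*e)*(a*b)" by (rule mult_left_mono) (use ab1 e0 in auto)
  have p: "(1+6*e)*((1-e)*(1-e)) - (1+e)^2 = 2*e*(1-6*e) + 6*e^3"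
    by (simp add: algebra_simps power2_eq_square power3_eq_cube)
  have p0: "0 \<le> 2*e*(1-6*e) + 6*e^3" using e0 e1 by simp
  have id1: "a^2 + b^2 = (a-b)^2 + 2*(a*b)" by (simp add: algebra_simps power2_eq_square)
  have q: "(1+e)^2 \<le> (1+6*e)*((1-e)*(1-e))" using p p0 by linarith
  have l1: "(-1/2 - 2*e)*(a*b) = -(a*b)/2 - 2*(e*(a*b))" by (simp add: algebra_simps)
  have l2: "(1-4*e)*(a*b) = (a*b) - 4*(e*(a*b))" by (simp add: algebra_simps)
  have l3: "(1+6*e)*(a*b) = (a*b) + 6*(e*(a*b))" by (simp add: algebra_simps)
  have l4: "(-1/2 + 3*e)*(a*b) = -(a*b)/2 + 3*(e*(a*b))" by (simp add: algebra_simps)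
  have e2: "(1-2*e)^2 = 1 - 4*e + 4*e^2" by (simp add: algebra_simps power2_eq_square)
  show "(-1/2 - 2*e) * (a*b) \<le> R"
    proof -
    have m1': "a*b - 4*(e*(a*b)) \<le> 1 - 4*e" using m1 unfolding l2 by simp
    have "2*R \<ge> 1 - 4*e + 4*e^2 - e^2 - 2*(a*b)" using R id1 sqe sl e2 by linarith
    thus ?thesis unfolding l1 using m1' zero_le_power2[of e] by linarith
  qed
  show "R \<le> (-1/2 + 3*e) * (a*b)"
    unfolding l4 using R id1 sq0 su m2 l3 q by linarith
qed


lemma pair:
  fixes e :: real and u v w :: complex
  assumes e0: "0 \<le> e" and e1: "e \<le> 1/6"
    and "1 - e \<le> cmod u" and "cmod u \<le> 1"
    and "1 - e \<le> cmod v" and "cmod v \<le> 1"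
    and "1 - e \<le> cmod w" and "cmod w \<le> 1"
    and S: "cmod (u + v + w) \<le> e"
  shows "-1/2 - 2*e \<le> cos (Arg u - Arg v) \<and> cos (Arg u - Arg v) \<le> -1/2 + 3*e"
proof -
  have "cmod (u + v) = cmod ((u+v+w) - w)" by simp
  also have "\<dots> \<le> cmod (u+v+w) + cmod w" by (rule norm_triangle_ineq4)
  finally have s2: "cmod (u+v) \<le> 1 + e" using S assms by linarith
  have "cmod w = cmod ((u+v+w) - (u+v))" by simp
  also have "\<dots> \<le> cmod (u+v+w) + cmod (u+v)" by (rule norm_triangle_ineq4)
  finally have s1: "1 - 2*e \<le> cmod (u+v)" using S assms by linarith
  have R: "(cmod (u+v))^2 = (cmod u)^2 + (cmod v)^2 + 2 * Re (u * cnj v)" by (rule norm_sum_sq)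
  note B = polyB[OF e0 e1 assms(3-6) s1 s2 R]
  have "0 < cmod u" "0 < cmod v" using assms by linarith+
  hence pos: "0 < cmod u * cmod v" by simp
  have rc: "Re (u * cnj v) = (cmod u * cmod v) * cos (Arg u - Arg v)" by (rule re_cnj)
  define P where "P = cmod u * cmod v"
  define c where "c = cos (Arg u - Arg v)"
  have B1: "P * (-1/2 - 2*e) \<le> P * c" using B(1) unfolding rc P_def c_def by (simp only: mult.commute)
  have B2: "P * c \<le> P * (-1/2 + 3*e)" using B(2) unfolding rc P_def c_def by (simp only: mult.commute)
  have pos': "0 < P" using pos P_def by simp
  show ?thesis using B1 B2 mult_le_cancel_left_pos[OF pos'] unfolding c_def by blast
qed

theorem lemma3:
  fixes \<epsilon> :: real and \<alpha> \<beta> \<gamma> :: complex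
  assumes "0 \<le> \<epsilon>" and "\<epsilon> \<le> 1/6"
    and "1 - \<epsilon> \<le> cmod \<alpha>" and "cmod \<alpha> \<le> 1"
    and "1 - \<epsilon> \<le> cmod \<beta>" and "cmod \<beta> \<le> 1"
    and "1 - \<epsilon> \<le> cmod \<gamma>" and "cmod \<gamma> \<le> 1"
    and "cmod (\<alpha> + \<beta> + \<gamma>) \<le> \<epsilon>"
  shows "\<forall>\<theta> \<in> {angle_mod (Arg \<alpha> - Arg \<beta>), angle_mod (Arg \<beta> - Arg \<gamma>),
                  angle_mod (Arg \<gamma> - Arg \<alpha>)}.
           \<bar>\<theta> - 2 * pi / 3\<bar> \<le> 6 * \<epsilon> \<or> \<bar>\<theta> - 4 * pi / 3\<bar> \<le> 6 * \<epsilon>"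
proof -
  have S2: "cmod (\<beta> + \<gamma> + \<alpha>) \<le> \<epsilon>" using assms(9) by (simp add: add_ac)
  have S3: "cmod (\<gamma> + \<alpha> + \<beta>) \<le> \<epsilon>" using assms(9) by (simp add: add_ac)
  have p1: "-1/2 - 2*\<epsilon> \<le> cos (Arg \<alpha> - Arg \<beta>) \<and> cos (Arg \<alpha> - Arg \<beta>) \<le> -1/2 + 3*\<epsilon>"
    by (rule pair[OF assms(1-9)])
  have p2: "-1/2 - 2*\<epsilon> \<le> cos (Arg \<beta> - Arg \<gamma>) \<and> cos (Arg \<beta> - Arg \<gamma>) \<le> -1/2 + 3*\<epsilon>"
    by (rule pair[OF assms(1,2,5,6,7,8,3,4) S2])
  have p3: "-1/2 - 2*\<epsilon> \<le> cos (Arg \<gamma> - Arg \<alpha>) \<and> cos (Arg \<gamma> - Arg \<alpha>) \<le> -1/2 + 3*\<epsilon>"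
    by (rule pair[OF assms(1,2,7,8,3,4,5,6) S3])
  show ?thesis
    using angT[OF assms(1,2)] p1 p2 p3 by auto
qed

end
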